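(* Let $X=\mathbb{C}^n$ with the standard inner product $(\cdot,\cdot)$, and consider the problem $u'(t)=F(u(t))=Lu(t)+N(u(t))$, $u(t_0)=u_0$, where the matrix $L$ satisfies $\operatorname{Re}(u,Lu)\le0$ for all $u\in X$. Suppose Assumptions 1 and 2 below hold, and let $\tilde u_n=u(t_n)$. Then $$\big\|\big((I-hL)^{-1}-\varphi_1(hL)\big)F(\tilde u_n)\big\|\le Ch.$$ If further $L\frac{d}{dt}N(u(t))\big|_{t=t_n}$ is uniformly bounded on $X$, then $$\big\|\big((I-\tfrac12hL)^{-1}-\varphi_1(hL)\big)F(\tilde u_n)\big\|\le Ch^2.$$ The constants can be chosen uniformly bounded on $[t_0,T]$, and in particular independent of $n$ and $h$ (i.e. independent of $\|L\|$).
   Context: $\varphi_1(z)=\int_0^1 e^{(1-\theta)z}\,d\theta=(e^z-1)/z$. Assumption 1: $L$ is the generator of a strongly continuous semigroup $e^{tL}$ on $X$. Assumption 2: the problem has a sufficiently smooth solution $u:[0,T]\to X$ with derivatives in $X$, and $N:X\to X$ is sufficiently often Fréchet differentiable in a strip along the exact solution, with all occurring derivatives uniformly bounded. *)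

theory Defs
  imports "HOL-Analysis.Analysis"
begin

definition mat_pow :: "complex^'n^'n \<Rightarrow> nat \<Rightarrow> complex^'n^'n" where
  "mat_pow A k = (((**) A) ^^ k) (mat 1)"

definition mexp :: "complex^'n^'n \<Rightarrow> complex^'n^'n" where
  "mexp A = (\<Sum>k. (1 / fact k) *\<^sub>R mat_pow A k)"

definition phi1 :: "complex^'n^'n \<Rightarrow> complex^'n^'n" where
  "phi1 A = integral {0..1::real} (\<lambda>\<theta>. mexp ((1 - \<theta>) *\<^sub>R A))"

text \<open>Standing setting with uniform bound M (Assumptions 1 and 2, X = C^n).
  u1, u2, u3 are the first three derivatives of the exact solution u on [t0,T];
  N1, N2 are the first two Frechet derivatives of N on a strip around the solution.\<close>
definition setting ::
  "complex^'n^'n \<Rightarrow> (complex^'n \<Rightarrow> complex^'n) \<Rightarrow> (real \<Rightarrow> complex^'n) \<Rightarrow> real \<Rightarrow> real \<Rightarrow> real \<Rightarrow> bool"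
where
  "setting L N u t0 T M \<longleftrightarrow>
     t0 < T \<and>
     (\<forall>v. inner v (L *v v) \<le> 0) \<and>
     (\<exists>u1 u2 u3. \<forall>t\<in>{t0..T}.
        (u has_vector_derivative u1 t) (at t within {t0..T}) \<and>
        (u1 has_vector_derivative u2 t) (at t within {t0..T}) \<and>
        (u2 has_vector_derivative u3 t) (at t within {t0..T}) \<and>
        u1 t = L *v u t + N (u t) \<and>
        norm (u1 t) \<le> M \<and> norm (u2 t) \<le> M \<and> norm (u3 t) \<le> M) \<and>
     (\<exists>\<delta>>0. \<exists>N1 :: complex^'n \<Rightarrow> ((complex^'n) \<Rightarrow>\<^sub>L (complex^'n)).
        \<exists>N2 :: complex^'n \<Rightarrow> ((complex^'n) \<Rightarrow>\<^sub>L ((complex^'n) \<Rightarrow>\<^sub>L (complex^'n))).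
        \<forall>v\<in>(\<Union>t\<in>{t0..T}. ball (u t) \<delta>).
          (N has_derivative blinfun_apply (N1 v)) (at v) \<and>
          (N1 has_derivative blinfun_apply (N2 v)) (at v) \<and>
          norm (N1 v) \<le> M \<and> norm (N2 v) \<le> M)"

end

theory Submission
  imports Defs
begin


typedef (overloaded) 'a endo = "UNIV :: ('a::euclidean_space \<Rightarrow>\<^sub>L 'a) set"
  morphisms rep_endo Abs_endo by simp

setup_lifting type_definition_endo

instantiation endo :: (euclidean_space) real_normed_algebra_1
begin
lift_definition zero_endo :: "'a endo" is 0 .
lift_definition plus_endo :: "'a endo \<Rightarrow> 'a endo \<Rightarrow> 'a endo" is "(+)" .
lift_definition minus_endo :: "'a endo \<Rightarrow> 'a endo \<Rightarrow> 'a endo" is "(-)" .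
lift_definition uminus_endo :: "'a endo \<Rightarrow> 'a endo" is "uminus" .
lift_definition scaleR_endo :: "real \<Rightarrow> 'a endo \<Rightarrow> 'a endo" is "(*\<^sub>R)" .
lift_definition norm_endo :: "'a endo \<Rightarrow> real" is norm .
lift_definition dist_endo :: "'a endo \<Rightarrow> 'a endo \<Rightarrow> real" is dist .
lift_definition sgn_endo :: "'a endo \<Rightarrow> 'a endo" is sgn .
lift_definition times_endo :: "'a endo \<Rightarrow> 'a endo \<Rightarrow> 'a endo" is "(o\<^sub>L)" .
lift_definition one_endo :: "'a endo" is id_blinfun .
definition uniformity_endo :: "('a endo \<times> 'a endo) filter" where
  "uniformity_endo = (INF e\<in>{0<..}. principal {(x, y). dist x y < e})"
definition open_endo :: "'a endo set \<Rightarrow> bool" where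
  "open_endo U = (\<forall>x\<in>U. eventually (\<lambda>(x', y). x' = x \<longrightarrow> y \<in> U) uniformity)"
instance
proof
  fix a b :: real and x y z :: "'a endo"
  show "a *\<^sub>R (x + y) = a *\<^sub>R x + a *\<^sub>R y" by transfer (simp add: scaleR_add_right)
  show "(a + b) *\<^sub>R x = a *\<^sub>R x + b *\<^sub>R x" by transfer (simp add: scaleR_add_left)
  show "a *\<^sub>R b *\<^sub>R x = (a * b) *\<^sub>R x" by transfer simp
  show "1 *\<^sub>R x = x" by transfer simp
  show "x + y + z = x + (y + z)" by transfer (simp add: add.assoc)
  show "x + y = y + x" by transfer (simp add: add.commute)
  show "0 + x = x" by transfer simp
  show "- x + x = 0" by transfer simp
  show "x - y = x + - y" by transfer simp
  show "x * y * z = x * (y * z)" by transfer (auto intro!: blinfun_eqI)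
  show "(x + y) * z = x * z + y * z" by transfer (auto intro!: blinfun_eqI simp: blinfun.add_left blinfun.add_right)
  show "x * (y + z) = x * y + x * z" by transfer (auto intro!: blinfun_eqI simp: blinfun.add_right blinfun.add_left)
  show "1 * x = x" by transfer (auto intro!: blinfun_eqI)
  show "x * 1 = x" by transfer (auto intro!: blinfun_eqI)
  show "(0::'a endo) \<noteq> 1"
  proof transfer
    show "(0::'a \<Rightarrow>\<^sub>L 'a) \<noteq> id_blinfun"
      using norm_blinfun_id[where 'a='a] by (metis norm_zero zero_neq_one)
  qed
  show "a *\<^sub>R x * y = a *\<^sub>R (x * y)" by transfer (auto intro!: blinfun_eqI simp: blinfun.scaleR_left blinfun.scaleR_right)
  show "x * a *\<^sub>R y = a *\<^sub>R (x * y)" by transfer (auto intro!: blinfun_eqI simp: blinfun.scaleR_right blinfun.scaleR_left)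
  show "dist x y = norm (x - y)" by transfer (simp add: dist_norm)
  show "sgn x = inverse (norm x) *\<^sub>R x" by transfer (simp add: sgn_div_norm)
  show "uniformity = (INF e\<in>{0<..}. principal {(x, y). dist (x::'a endo) y < e})"
    by (simp add: uniformity_endo_def)
  show "open U = (\<forall>x\<in>U. \<forall>\<^sub>F (x', y) in uniformity. x' = x \<longrightarrow> y \<in> U)" for U :: "'a endo set"
    by (simp add: open_endo_def)
  show "(norm x = 0) = (x = 0)" by transfer simp
  show "norm (x + y) \<le> norm x + norm y" by transfer (rule norm_triangle_ineq)
  show "norm (a *\<^sub>R x) = \<bar>a\<bar> * norm x" by transfer simp
  show "norm (x * y) \<le> norm x * norm y" by transfer (rule norm_blinfun_compose)
  show "norm (1::'a endo) = 1" by transfer simp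
qed
end

instance endo :: (euclidean_space) banach
proof
  fix X :: "nat \<Rightarrow> 'a endo"
  assume "Cauchy X"
  then have "Cauchy (\<lambda>n. rep_endo (X n))"
    unfolding Cauchy_def by (simp add: dist_endo.rep_eq)
  then obtain L where L: "(\<lambda>n. rep_endo (X n)) \<longlonglongrightarrow> L"
    using convergent_def Cauchy_convergent_iff by blast
  have "X \<longlonglongrightarrow> Abs_endo L"
    using L unfolding tendsto_iff by (simp add: dist_endo.rep_eq Abs_endo_inverse)
  then show "convergent X" by (auto simp: convergent_def)
qed



lift_definition app :: "'a::euclidean_space endo \<Rightarrow> 'a \<Rightarrow> 'a" is blinfun_apply .

lemma app_mult[simp]: "app (X * Y) x = app X (app Y x)"
  by transfer simp
lemma app_one[simp]: "app 1 x = x"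
  by transfer simp
lemma app_scaleR_left[simp]: "app (a *\<^sub>R X) x = a *\<^sub>R app X x"
  by transfer (simp add: blinfun.scaleR_left)
lemma app_add_left[simp]: "app (X + Y) x = app X x + app Y x"
  by transfer (simp add: blinfun.add_left)
lemma app_diff_left[simp]: "app (X - Y) x = app X x - app Y x"
  by transfer (simp add: blinfun.diff_left)
lemma app_minus_left[simp]: "app (- X) x = - app X x"
  by transfer (simp add: blinfun.minus_left)
lemma app_add_right: "app X (x + y) = app X x + app X y"
  by transfer (simp add: blinfun.add_right)
lemma app_diff_right: "app X (x - y) = app X x - app X y"
  by transfer (simp add: blinfun.diff_right)
lemma app_scaleR_right: "app X (a *\<^sub>R x) = a *\<^sub>R app X x"
  by transfer (simp add: blinfun.scaleR_right)
lemma norm_app: "norm (app X x) \<le> norm X * norm x"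
  by transfer (rule norm_blinfun)
lemma bounded_linear_app_left: "bounded_linear (\<lambda>X. app X x)"
  by (rule bounded_linear_intro[where K="norm x"])
     (auto simp: mult.commute intro: norm_app, metis norm_app mult.commute)
lemma bounded_linear_app_right: "bounded_linear (app X)"
  by transfer (rule blinfun.bounded_linear_right)
lemma endo_eqI: "(\<And>x. app X x = app Y x) \<Longrightarrow> X = Y"
  by transfer (auto intro: blinfun_eqI)

definition Phi :: "complex^'n^'n \<Rightarrow> (complex^'n) endo" where
  "Phi M = Abs_endo (Blinfun ((*v) M))"

lemma app_Phi[simp]: "app (Phi M) x = M *v x"
  unfolding Phi_def app.rep_eq
  by (simp add: Abs_endo_inverse bounded_linear_Blinfun_apply)

lemma scaleR_mat_vec: "((c::real) *\<^sub>R (M::complex^'n^'m)) *v x = c *\<^sub>R (M *v x)"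
  by (simp add: vec_eq_iff matrix_vector_mult_def scaleR_sum_right)

lemma Phi_mult: "Phi (A ** B) = Phi A * Phi B"
  by (rule endo_eqI) (simp add: matrix_vector_mul_assoc)
lemma Phi_one: "Phi (mat 1) = 1"
  by (rule endo_eqI) simp
lemma Phi_scaleR: "Phi (c *\<^sub>R A) = c *\<^sub>R Phi A"
  by (rule endo_eqI) (simp add: scaleR_mat_vec)

lemma mat_pow_Suc: "mat_pow A (Suc k) = A ** mat_pow A k"
  by (simp add: mat_pow_def)
lemma Phi_pow: "Phi A ^ k = Phi (mat_pow A k)"
  by (induction k) (simp_all add: mat_pow_Suc Phi_mult Phi_one, simp add: mat_pow_def Phi_one)

definition Psi :: "(complex^'n) endo \<Rightarrow> complex^'n^'n" where
  "Psi X = (\<chi> i j. app X (axis j 1) $ i)"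

lemma norm_vec_le_sum: "norm (v::'a::real_normed_vector^'n) \<le> (\<Sum>i\<in>UNIV. norm (v $ i))"
  unfolding norm_vec_def by (rule L2_set_le_sum) simp

lemma Psi_scaleR: "Psi (r *\<^sub>R X) = r *\<^sub>R Psi X" by (simp add: Psi_def vec_eq_iff)

lemma bounded_linear_Psi: "bounded_linear Psi"
proof (rule bounded_linear_intro[where K="real CARD('n) * real CARD('n)"])
  fix X Y :: "(complex^'n) endo" and r :: real
  show "Psi (X + Y) = Psi X + Psi Y" by (simp add: Psi_def vec_eq_iff)
  show "Psi (r *\<^sub>R X) = r *\<^sub>R Psi X" by (simp add: Psi_def vec_eq_iff)
  have "norm (Psi X) \<le> (\<Sum>i\<in>UNIV. norm (Psi X $ i))" by (rule norm_vec_le_sum)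
  also have "\<dots> \<le> (\<Sum>i\<in>(UNIV::'n set). \<Sum>j\<in>(UNIV::'n set). norm X)"
  proof (rule sum_mono)
    fix i
    have "norm (Psi X $ i) \<le> (\<Sum>j\<in>UNIV. norm (Psi X $ i $ j))" by (rule norm_vec_le_sum)
    also have "\<dots> \<le> (\<Sum>j\<in>(UNIV::'n set). norm X)"
    proof (rule sum_mono)
      fix j
      have "norm (Psi X $ i $ j) = norm (app X (axis j 1) $ i)" by (simp add: Psi_def)
      also have "\<dots> \<le> norm (app X (axis j 1))" by (rule Finite_Cartesian_Product.norm_nth_le)
      also have "\<dots> \<le> norm X * norm (axis j (1::complex))" by (rule norm_app)
      also have "\<dots> = norm X" by (simp add: norm_axis_1)
      finally show "norm (Psi X $ i $ j) \<le> norm X" .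
    qed
    finally show "norm (Psi X $ i) \<le> (\<Sum>j\<in>(UNIV::'n set). norm X)" .
  qed
  also have "\<dots> = norm X * (real CARD('n) * real CARD('n))" by simp
  finally show "norm (Psi X) \<le> norm X * (real CARD('n) * real CARD('n))" .
qed

lemma Psi_Phi[simp]: "Psi (Phi M) = M"
  by (simp add: Psi_def vec_eq_iff matrix_vector_mult_def axis_def if_distrib cong: if_cong)

lemma linear_mat_vec_left: "bounded_linear (\<lambda>M::complex^'n^'n. M *v x)"
  unfolding linear_conv_bounded_linear[symmetric]
  by (rule linearI) (simp_all add: matrix_vector_mult_add_rdistrib scaleR_mat_vec)

lemma mexp_sums: "(\<lambda>k. (1 / fact k) *\<^sub>R mat_pow C k) sums Psi (exp (Phi C))"
proof -
  have "(\<lambda>k. Psi (Phi C ^ k /\<^sub>R fact k)) sums Psi (exp (Phi C))"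
    by (rule bounded_linear.sums[OF bounded_linear_Psi exp_converges])
  moreover have "Psi (Phi C ^ k /\<^sub>R fact k) = (1 / fact k) *\<^sub>R mat_pow C k" for k
    by (simp add: Psi_scaleR Phi_pow divide_inverse)
  ultimately show ?thesis by simp
qed

lemma mexp_Psi: "mexp C = Psi (exp (Phi C))"
  unfolding mexp_def using mexp_sums sums_unique by metis

lemma mexp_app: "mexp C *v x = app (exp (Phi C)) x"
proof -
  have "(\<lambda>k. ((1 / fact k) *\<^sub>R mat_pow C k) *v x) sums (mexp C *v x)"
    unfolding mexp_Psi by (rule bounded_linear.sums[OF linear_mat_vec_left mexp_sums])
  moreover have "(\<lambda>k. app (Phi C ^ k /\<^sub>R fact k) x) sums app (exp (Phi C)) x"
    by (rule bounded_linear.sums[OF bounded_linear_app_left exp_converges])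
  moreover have "app (Phi C ^ k /\<^sub>R fact k) x = ((1 / fact k) *\<^sub>R mat_pow C k) *v x" for k
    by (simp add: Phi_pow scaleR_mat_vec divide_inverse)
  ultimately show ?thesis using sums_unique2 by fastforce
qed



lemma app_exp_deriv:
  "((\<lambda>s. app (exp (s *\<^sub>R B)) x) has_vector_derivative app B (app (exp (s *\<^sub>R B)) x)) (at s within S)"
proof -
  have "((\<lambda>s. exp (s *\<^sub>R B)) has_vector_derivative B * exp (s *\<^sub>R B)) (at s within S)"
    using exp_scaleR_has_vector_derivative_left has_vector_derivative_at_within by blast
  from bounded_linear.has_vector_derivative[OF bounded_linear_app_left this, of x]
  show ?thesis by simp
qed

lemma contraction:
  fixes B :: "'a::euclidean_space endo"
  assumes diss: "\<And>y. inner y (app B y) \<le> 0" and s: "0 \<le> s"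
  shows "norm (app (exp (s *\<^sub>R B)) x) \<le> norm x"
proof -
  let ?y = "\<lambda>t. app (exp (t *\<^sub>R B)) x"
  let ?q = "\<lambda>t. inner (?y t) (?y t)"
  have d: "DERIV ?q t :> (inner (?y t) (app B (?y t)) + inner (app B (?y t)) (?y t))" for t
    unfolding has_real_derivative_iff_has_vector_derivative
    by (rule bounded_bilinear.has_vector_derivative[OF bounded_bilinear_inner app_exp_deriv app_exp_deriv])
  have "?q s \<le> ?q 0"
  proof (rule DERIV_nonpos_imp_nonincreasing[OF s])
    fix t
    show "\<exists>y. DERIV ?q t :> y \<and> y \<le> 0"
      apply (rule exI[of _ "inner (app (exp (t *\<^sub>R B)) x) (app B (app (exp (t *\<^sub>R B)) x)) + inner (app B (app (exp (t *\<^sub>R B)) x)) (app (exp (t *\<^sub>R B)) x)"])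
      apply (rule conjI[OF d])
      apply (subst inner_commute[of "app B _"])
      using diss[of "app (exp (t *\<^sub>R B)) x"] by linarith
  qed
  then have "(norm (?y s))\<^sup>2 \<le> (norm x)\<^sup>2"
    by (simp only: power2_norm_eq_inner scaleR_zero_left exp_zero app_one)
  then show ?thesis using norm_ge_zero power2_le_imp_le by blast
qed



lemma mvt_helper:
  fixes f :: "real \<Rightarrow> 'a::banach"
  assumes ab: "a \<le> b"
    and d: "\<And>x. x \<in> {a..b} \<Longrightarrow> (f has_vector_derivative f' x) (at x within {a..b})"
    and K: "\<And>x. x \<in> {a..b} \<Longrightarrow> norm (f' x) \<le> K"
  shows "norm (f b - f a) \<le> K * (b - a)"
proof -
  have i: "(f' has_integral (f b - f a)) (cbox a b)"
    using fundamental_theorem_of_calculus[OF ab d] by simp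
  have K0: "0 \<le> K" using K[of a] ab by (meson atLeastAtMost_iff norm_ge_zero order.refl order_trans)
  have K': "\<And>x. x \<in> cbox a b \<Longrightarrow> norm (f' x) \<le> K" using K by auto
  from has_integral_bound[OF K0 i K'] show ?thesis using ab by simp
qed

lemma exp_commute_B: "B * exp (s *\<^sub>R B) = exp (s *\<^sub>R B) * B"
  using vector_derivative_unique_at[OF exp_scaleR_has_vector_derivative_left exp_scaleR_has_vector_derivative_right] .

lemma app_commute: "app B (app (exp (s *\<^sub>R B)) y) = app (exp (s *\<^sub>R B)) (app B y)"
  using arg_cong[OF exp_commute_B, of "\<lambda>X. app X y" B s] by simp

lemma fE_deriv:
  "((\<lambda>\<theta>. app (exp ((1 - \<theta>) *\<^sub>R B)) y) has_vector_derivative - app (exp ((1 - \<theta>) *\<^sub>R B)) (app B y)) (at \<theta> within S)"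
proof -
  have d1: "((\<lambda>\<theta>::real. 1 - \<theta>) has_vector_derivative -1) (at \<theta> within S)"
    by (auto intro!: derivative_eq_intros)
  have d2: "((\<lambda>s. app (exp (s *\<^sub>R B)) y) has_vector_derivative app B (app (exp ((1 - \<theta>) *\<^sub>R B)) y)) (at (1 - \<theta>) within (\<lambda>\<theta>. 1 - \<theta>) ` S)"
    by (rule app_exp_deriv)
  from vector_diff_chain_within[OF d1 d2] show ?thesis
    by (simp add: o_def app_commute)
qed

lemma fE_cont: "continuous_on S (\<lambda>\<theta>. app (exp ((1 - \<theta>) *\<^sub>R B)) y)"
  by (intro continuous_at_imp_continuous_on ballI has_vector_derivative_continuous[OF fE_deriv[where S=UNIV]])

context
  fixes B :: "'a::euclidean_space endo" and w :: 'a
  assumes diss: "\<And>y. inner y (app B y) \<le> 0"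
begin

lemma fE_bound: "\<theta> \<le> 1 \<Longrightarrow> norm (app (exp ((1 - \<theta>) *\<^sub>R B)) y) \<le> norm y"
  by (rule contraction[OF diss]) simp

lemma core1: "norm (app (exp B) w - integral {0..1} (\<lambda>\<theta>. app (exp ((1 - \<theta>) *\<^sub>R B)) w)) \<le> norm (app B w)"
proof -
  define f where "f = (\<lambda>\<theta>. app (exp ((1 - \<theta>) *\<^sub>R B)) w)"
  define H where "H = (\<lambda>t. t *\<^sub>R f 0 - integral {0..t} f)"
  have cf: "continuous_on {0..1} f" unfolding f_def by (rule fE_cont)
  have dH: "(H has_vector_derivative (f 0 - f t)) (at t within {0..1})" if t: "t \<in> {0..1}" for t
    unfolding H_def
    by (rule derivative_eq_intros integral_has_vector_derivative[OF cf t] | simp)+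
  have bH: "norm (f 0 - f t) \<le> norm (app B w)" if t: "t \<in> {0..1}" for t
  proof -
    have "norm (f t - f 0) \<le> norm (app B w) * (t - 0)"
    proof (rule mvt_helper)
      show "0 \<le> t" using t by simp
      fix x assume x: "x \<in> {0..t}"
      show "(f has_vector_derivative - app (exp ((1 - x) *\<^sub>R B)) (app B w)) (at x within {0..t})"
        unfolding f_def by (rule fE_deriv)
      show "norm (- app (exp ((1 - x) *\<^sub>R B)) (app B w)) \<le> norm (app B w)"
        using x t by (simp add: fE_bound)
    qed
    also have "\<dots> \<le> norm (app B w)" using t by (simp add: mult_left_le)
    finally show ?thesis by (simp add: norm_minus_commute)
  qed
  have "norm (H 1 - H 0) \<le> norm (app B w) * (1 - 0)"
    by (rule mvt_helper[OF _ dH bH]) auto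
  moreover have "H 0 = 0" by (simp add: H_def)
  moreover have "H 1 = app (exp B) w - integral {0..1} f" by (simp add: H_def f_def)
  ultimately show ?thesis by (simp add: f_def)
qed

lemma core2: "norm ((1/2) *\<^sub>R (w + app (exp B) w) - integral {0..1} (\<lambda>\<theta>. app (exp ((1 - \<theta>) *\<^sub>R B)) w)) \<le> norm (app B (app B w))"
proof -
  define f where "f = (\<lambda>\<theta>. app (exp ((1 - \<theta>) *\<^sub>R B)) w)"
  define p where "p = (\<lambda>\<theta>. - app (exp ((1 - \<theta>) *\<^sub>R B)) (app B w))"
  define K where "K = norm (app B (app B w))"
  define H where "H = (\<lambda>t. (t / 2) *\<^sub>R (f 0 + f t) - integral {0..t} f)"
  have cf: "continuous_on {0..1} f" unfolding f_def by (rule fE_cont)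
  have df: "(f has_vector_derivative p t) (at t within S)" for t S
    unfolding f_def p_def by (rule fE_deriv)
  have dp: "(p has_vector_derivative app (exp ((1 - t) *\<^sub>R B)) (app B (app B w))) (at t within S)" for t S
    unfolding p_def using fE_deriv[where y="app B w" and B=B and \<theta>=t and S=S] has_vector_derivative_minus by fastforce
  have dH: "(H has_vector_derivative ((1/2) *\<^sub>R (f 0 + f t) + (t/2) *\<^sub>R p t - f t)) (at t within {0..1})"
    if t: "t \<in> {0..1}" for t
  proof -
    have a: "((\<lambda>t::real. t / 2) has_field_derivative 1/2) (at t within {0..1})"
      by (auto intro!: derivative_eq_intros)
    have b: "((\<lambda>t. f 0 + f t) has_vector_derivative (0 + p t)) (at t within {0..1})"
      by (rule has_vector_derivative_add[OF has_vector_derivative_const df])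
    have c: "((\<lambda>t. (t / 2) *\<^sub>R (f 0 + f t) - integral {0..t} f) has_vector_derivative
        ((t / 2) *\<^sub>R (0 + p t) + (1/2) *\<^sub>R (f 0 + f t) - f t)) (at t within {0..1})"
      by (rule has_vector_derivative_diff[OF has_vector_derivative_scaleR[OF a b] integral_has_vector_derivative[OF cf t]])
    show ?thesis unfolding H_def using c by (simp add: algebra_simps)
  qed
  have bp: "norm (p t - p s) \<le> K" if "0 \<le> s" "s \<le> t" "t \<le> 1" for s t
  proof -
    have "norm (p t - p s) \<le> K * (t - s)"
    proof (rule mvt_helper)
      show "s \<le> t" by fact
      fix x assume x: "x \<in> {s..t}"
      show "(p has_vector_derivative app (exp ((1 - x) *\<^sub>R B)) (app B (app B w))) (at x within {s..t})"
        by (rule dp)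
      show "norm (app (exp ((1 - x) *\<^sub>R B)) (app B (app B w))) \<le> K"
        using x that unfolding K_def by (simp add: fE_bound)
    qed
    also have "\<dots> \<le> K" using that by (simp add: K_def mult_left_le)
    finally show ?thesis .
  qed
  have bQ: "norm (f t - f 0 - t *\<^sub>R p t) \<le> K" if t: "t \<in> {0..1}" for t
  proof -
    define G where "G = (\<lambda>s. f s - s *\<^sub>R p t)"
    have "norm (G t - G 0) \<le> K * (t - 0)"
    proof (rule mvt_helper)
      show "0 \<le> t" using t by simp
      fix x assume x: "x \<in> {0..t}"
      show "(G has_vector_derivative p x - p t) (at x within {0..t})"
        unfolding G_def by (rule derivative_eq_intros df | simp)+
      show "norm (p x - p t) \<le> K" using bp[of x t] x t by (simp add: norm_minus_commute)
    qed
    also have "\<dots> \<le> K" using t by (simp add: K_def mult_left_le)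
    finally show ?thesis by (simp add: G_def algebra_simps)
  qed
  have bH: "norm ((1/2) *\<^sub>R (f 0 + f t) + (t/2) *\<^sub>R p t - f t) \<le> K" if t: "t \<in> {0..1}" for t
  proof -
    have "(1/2) *\<^sub>R (f 0 + f t) + (t/2) *\<^sub>R p t - f t = - (1/2) *\<^sub>R (f t - f 0 - t *\<^sub>R p t)"
      by (simp add: algebra_simps flip: scaleR_add_left)
    then have "norm ((1/2) *\<^sub>R (f 0 + f t) + (t/2) *\<^sub>R p t - f t) = (1/2) * norm (f t - f 0 - t *\<^sub>R p t)"
      by simp
    also have "\<dots> \<le> K" using bQ[OF t] norm_ge_zero[of "app B (app B w)"] unfolding K_def by linarith
    finally show ?thesis .
  qed
  have "norm (H 1 - H 0) \<le> K * (1 - 0)"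
    by (rule mvt_helper[OF _ dH bH]) auto
  moreover have "H 0 = 0" by (simp add: H_def)
  moreover have "H 1 = (1/2) *\<^sub>R (w + app (exp B) w) - integral {0..1} f" by (simp add: H_def f_def add.commute)
  ultimately show ?thesis by (simp add: f_def K_def)
qed

end



lemma phi1_app: "phi1 A *v v = integral {0..1} (\<lambda>\<theta>. app (exp ((1 - \<theta>) *\<^sub>R Phi A)) v)"
proof -
  let ?g = "\<lambda>\<theta>::real. mexp ((1 - \<theta>) *\<^sub>R A)"
  have geq: "?g = (\<lambda>\<theta>. Psi (exp ((1 - \<theta>) *\<^sub>R Phi A)))"
    by (simp add: mexp_Psi Phi_scaleR)
  have ce: "isCont (\<lambda>s::real. exp (s *\<^sub>R Phi A)) s" for s
    using has_vector_derivative_continuous[OF exp_scaleR_has_vector_derivative_left] .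
  have "isCont (\<lambda>\<theta>. Psi (exp ((1 - \<theta>) *\<^sub>R Phi A))) \<theta>" for \<theta>
    apply (rule isCont_o2[OF _ linear_continuous_at[OF bounded_linear_Psi]])
    apply (rule isCont_o2[OF _ ce])
    by (intro continuous_intros)
  then have "continuous_on {0..1} ?g" unfolding geq
    by (intro continuous_at_imp_continuous_on ballI)
  then have int: "?g integrable_on {0..1}" by (rule integrable_continuous_real)
  have "integral {0..1} ((\<lambda>M. M *v v) \<circ> ?g) = integral {0..1} ?g *v v"
    by (rule integral_linear[OF int linear_mat_vec_left])
  then show ?thesis by (simp add: phi1_def o_def mexp_app Phi_scaleR)
qed



lemma int_deriv: "integral {0..1} (\<lambda>\<theta>. app (exp ((1 - \<theta>) *\<^sub>R B)) (app B w)) = app (exp B) w - w"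
proof -
  have "((\<lambda>\<theta>. - app (exp ((1 - \<theta>) *\<^sub>R B)) (app B w)) has_integral
      (app (exp ((1 - 1) *\<^sub>R B)) w - app (exp ((1 - 0) *\<^sub>R B)) w)) {0..1}"
    by (rule fundamental_theorem_of_calculus) (auto intro: fE_deriv)
  from has_integral_neg[OF this]
  have "((\<lambda>\<theta>. app (exp ((1 - \<theta>) *\<^sub>R B)) (app B w)) has_integral
      - (w - app (exp B) w)) {0..1}"
    by simp
  then show ?thesis by (simp add: integral_unique)
qed

lemma int_app_f: "(\<lambda>\<theta>. app (exp ((1 - \<theta>) *\<^sub>R B)) y) integrable_on {0..1}"
  by (rule integrable_continuous_real[OF fE_cont])



lemma mat_vec_scaleR_right: "(M::complex^'n^'m) *v ((c::real) *\<^sub>R x) = c *\<^sub>R (M *v x)"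
  by (simp add: vec_eq_iff matrix_vector_mult_def scaleR_sum_right)

lemma resolvent_lb:
  fixes L :: "complex^'n^'n"
  assumes diss: "\<forall>v. inner v (L *v v) \<le> 0" and c: "0 \<le> c"
  shows "norm x \<le> norm ((mat 1 - c *\<^sub>R L) *v x)"
proof -
  have eq: "(mat 1 - c *\<^sub>R L) *v x = x - c *\<^sub>R (L *v x)"
    by (simp add: matrix_vector_mult_diff_rdistrib scaleR_mat_vec)
  have "(norm ((mat 1 - c *\<^sub>R L) *v x))\<^sup>2 = (norm x)\<^sup>2 - 2 * c * inner x (L *v x) + c\<^sup>2 * (norm (L *v x))\<^sup>2"
    unfolding eq power2_norm_eq_inner
    by (simp add: inner_diff_left inner_diff_right inner_commute power2_eq_square algebra_simps)
  also have "\<dots> \<ge> (norm x)\<^sup>2"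
  proof -
    have a: "c * inner x (L *v x) \<le> 0" using diss[rule_format, of x] c by (simp add: mult_nonneg_nonpos)
    have b: "0 \<le> c\<^sup>2 * (norm (L *v x))\<^sup>2" by simp
    have "2 * c * (x \<bullet> (L *v x)) = 2 * (c * (x \<bullet> (L *v x)))" by simp
    then show ?thesis using a b by linarith
  qed
  finally show ?thesis using norm_ge_zero power2_le_imp_le by blast
qed

lemma resolvent:
  fixes L :: "complex^'n^'n"
  assumes diss: "\<forall>v. inner v (L *v v) \<le> 0" and c: "0 \<le> c"
  defines "Mt \<equiv> mat 1 - c *\<^sub>R L"
  shows "Mt ** matrix_inv Mt = mat 1" "matrix_inv Mt ** Mt = mat 1"
    "\<And>y. norm (matrix_inv Mt *v y) \<le> norm y"
    "L ** matrix_inv Mt = matrix_inv Mt ** L"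
proof -
  have "inj ((*v) Mt)"
  proof (rule injI)
    fix x y assume "Mt *v x = Mt *v y"
    then have "Mt *v (x - y) = 0" by (simp add: matrix_vector_mult_diff_distrib)
    then have "norm (x - y) \<le> 0" using resolvent_lb[OF diss c, of "x - y"] by (simp add: Mt_def)
    then show "x = y" by simp
  qed
  then have "invertible Mt" using matrix_left_invertible_injective invertible_left_inverse by blast
  then have "\<exists>A'. Mt ** A' = mat 1 \<and> A' ** Mt = mat 1" by (simp add: invertible_def)
  then have inv: "Mt ** matrix_inv Mt = mat 1 \<and> matrix_inv Mt ** Mt = mat 1"
    unfolding matrix_inv_def by (rule someI_ex)
  then show 1: "Mt ** matrix_inv Mt = mat 1" and 2: "matrix_inv Mt ** Mt = mat 1" by auto
  show "norm (matrix_inv Mt *v y) \<le> norm y" for y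
    using resolvent_lb[OF diss c, of "matrix_inv Mt *v y"] 1
    by (simp add: Mt_def matrix_vector_mul_assoc)
  have LM: "L ** Mt = Mt ** L"
    unfolding matrix_eq
    by (simp add: Mt_def matrix_vector_mul_assoc[symmetric] matrix_vector_mult_diff_rdistrib
        matrix_vector_mult_diff_distrib scaleR_mat_vec mat_vec_scaleR_right)
  have "L ** matrix_inv Mt = matrix_inv Mt ** Mt ** L ** matrix_inv Mt"
    using 2 by (simp add: matrix_mul_lid)
  also have "\<dots> = matrix_inv Mt ** (L ** Mt) ** matrix_inv Mt"
    by (simp add: LM matrix_mul_assoc)
  also have "\<dots> = matrix_inv Mt ** L"
    using 1 by (simp add: matrix_mul_assoc[symmetric] matrix_mul_rid)
  finally show "L ** matrix_inv Mt = matrix_inv Mt ** L" .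
qed




lemma key:
  fixes L :: "complex^'n^'n"
  assumes diss: "\<forall>v. inner v (L *v v) \<le> 0" and h: "0 < h"
  shows "norm ((matrix_inv (mat 1 - h *\<^sub>R L) - phi1 (h *\<^sub>R L)) *v v) \<le> h * norm (L *v v)"
    and "norm ((matrix_inv (mat 1 - (h / 2) *\<^sub>R L) - phi1 (h *\<^sub>R L)) *v v) \<le> h\<^sup>2 * norm (L *v (L *v v))"
proof -
  define B where "B = Phi (h *\<^sub>R L)"
  have appB: "app B y = h *\<^sub>R (L *v y)" for y by (simp add: B_def scaleR_mat_vec)
  have dissB: "inner y (app B y) \<le> 0" for y
    using diss h by (simp add: appB mult_nonneg_nonpos)
  define E where "E = (\<lambda>\<theta>::real. exp ((1 - \<theta>) *\<^sub>R B))"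
  have phi: "phi1 (h *\<^sub>R L) *v x = integral {0..1} (\<lambda>\<theta>. app (E \<theta>) x)" for x
    by (simp add: phi1_app E_def B_def)
  have intdiff: "integral {0..1} (\<lambda>\<theta>. app (E \<theta>) (y - a *\<^sub>R app B y)) =
      integral {0..1} (\<lambda>\<theta>. app (E \<theta>) y) - a *\<^sub>R (app (exp B) y - y)" for y a
  proof -
    have "integral {0..1} (\<lambda>\<theta>. app (E \<theta>) (y - a *\<^sub>R app B y)) =
        integral {0..1} (\<lambda>\<theta>. app (E \<theta>) y - a *\<^sub>R app (E \<theta>) (app B y))"
      by (simp add: app_diff_right app_scaleR_right)
    also have "\<dots> = integral {0..1} (\<lambda>\<theta>. app (E \<theta>) y) - integral {0..1} (\<lambda>\<theta>. a *\<^sub>R app (E \<theta>) (app B y))"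
      by (rule integral_diff) (simp_all add: E_def int_app_f flip: app_scaleR_right)
    also have "integral {0..1} (\<lambda>\<theta>. a *\<^sub>R app (E \<theta>) (app B y)) = a *\<^sub>R (app (exp B) y - y)"
      by (simp add: E_def int_deriv)
    finally show ?thesis .
  qed
  {
    fix c a :: real
    assume c: "c = a * h" and a: "0 \<le> a"
    define R where "R = matrix_inv (mat 1 - c *\<^sub>R L)"
    have c0: "0 \<le> c" using c a h by simp
    note res = resolvent[OF diss c0, folded R_def]
    define w where "w = R *v v"
    have vw: "v = w - a *\<^sub>R app B w"
    proof -
      have "v = (mat 1 - c *\<^sub>R L) *v w" unfolding w_def
        by (simp add: matrix_vector_mul_assoc res(1))
      also have "\<dots> = w - a *\<^sub>R app B w"
        by (simp add: matrix_vector_mult_diff_rdistrib scaleR_mat_vec appB c)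
      finally show ?thesis .
    qed
    have "(R - phi1 (h *\<^sub>R L)) *v v = w - integral {0..1} (\<lambda>\<theta>. app (E \<theta>) w) + a *\<^sub>R (app (exp B) w - w)"
      unfolding matrix_vector_mult_diff_rdistrib phi
      by (subst (2) vw, subst intdiff) (simp add: w_def)
    moreover have "norm (R *v y) \<le> norm y" for y by (rule res(3))
    moreover have "L *v (R *v y) = R *v (L *v y)" for y
      by (simp add: matrix_vector_mul_assoc res(4))
    ultimately have "(R - phi1 (h *\<^sub>R L)) *v v = w - integral {0..1} (\<lambda>\<theta>. app (E \<theta>) w) + a *\<^sub>R (app (exp B) w - w)"
      "\<And>y. norm (R *v y) \<le> norm y" "\<And>y. L *v (R *v y) = R *v (L *v y)"
      by auto
  } note gen = this
  {
    define R where "R = matrix_inv (mat 1 - h *\<^sub>R L)"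
    define w where "w = R *v v"
    note g = gen[of h 1, simplified, folded R_def w_def]
    have "(R - phi1 (h *\<^sub>R L)) *v v = app (exp B) w - integral {0..1} (\<lambda>\<theta>. app (E \<theta>) w)"
      using g(1) by (simp add: algebra_simps)
    also have "norm \<dots> \<le> norm (app B w)"
      unfolding E_def by (rule core1[OF dissB])
    also have "\<dots> = h * norm (R *v (L *v v))"
      using h by (simp add: appB w_def g(3))
    also have "\<dots> \<le> h * norm (L *v v)"
      using h g(2) by (simp add: mult_left_mono)
    finally show "norm ((matrix_inv (mat 1 - h *\<^sub>R L) - phi1 (h *\<^sub>R L)) *v v) \<le> h * norm (L *v v)"
      by (simp add: R_def)
  }
  {
    define R where "R = matrix_inv (mat 1 - (h / 2) *\<^sub>R L)"
    define w where "w = R *v v"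
    note g = gen[of "h / 2" "1/2", simplified, folded R_def w_def]
    have half: "w - (1/2) *\<^sub>R w = (1/2) *\<^sub>R w"
      by (metis add_diff_cancel_right' field_sum_of_halves scaleR_add_left scaleR_one)
    have "(R - phi1 (h *\<^sub>R L)) *v v = (1/2) *\<^sub>R (w + app (exp B) w) - integral {0..1} (\<lambda>\<theta>. app (E \<theta>) w)"
    proof -
      let ?I = "integral {0..1} (\<lambda>\<theta>. app (E \<theta>) w)" and ?e = "app (exp B) w"
      have "(R - phi1 (h *\<^sub>R L)) *v v = (w - (1/2) *\<^sub>R w) + (1/2) *\<^sub>R ?e - ?I"
        unfolding g(1) scaleR_diff_right by (simp add: algebra_simps)
      also have "\<dots> = (1/2) *\<^sub>R (w + ?e) - ?I" unfolding half scaleR_add_right ..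
      finally show ?thesis .
    qed
    also have "norm \<dots> \<le> norm (app B (app B w))"
      unfolding E_def by (rule core2[OF dissB])
    also have "\<dots> = h\<^sup>2 * norm (R *v (L *v (L *v v)))"
      using h by (simp add: appB w_def g(3) mat_vec_scaleR_right power2_eq_square)
    also have "\<dots> \<le> h\<^sup>2 * norm (L *v (L *v v))"
      using h g(2) by (simp add: mult_left_mono)
    finally show "norm ((matrix_inv (mat 1 - (h / 2) *\<^sub>R L) - phi1 (h *\<^sub>R L)) *v v) \<le> h\<^sup>2 * norm (L *v (L *v v))"
      by (simp add: R_def)
  }
qed



lemma chain_vec:
  assumes "(u has_vector_derivative v) (at t within S)"
    and "(G has_derivative blinfun_apply D) (at (u t))"
  shows "((\<lambda>s. G (u s)) has_vector_derivative blinfun_apply D v) (at t within S)"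
  using has_derivative_compose[OF assms(1)[unfolded has_vector_derivative_def] assms(2)]
  unfolding has_vector_derivative_def by (simp add: blinfun.scaleR_right)

lemma setting_bounds:
  fixes L :: "complex^'n^'n"
  assumes st: "setting L N u t0 T M" and t: "t \<in> {t0..T}"
  shows "0 \<le> M" "norm (L *v u t + N (u t)) \<le> M"
    "norm (L *v (L *v u t + N (u t))) \<le> M + M * M"
    "norm (L *v vector_derivative (\<lambda>s. N (u s)) (at t within {t0..T})) \<le> M \<Longrightarrow>
       norm (L *v (L *v (L *v u t + N (u t)))) \<le> 2 * M + M * M + M * (M * M)"
proof -
  let ?S = "{t0..T}"
  from st have tT: "t0 < T" unfolding setting_def by blast
  from st obtain u1 u2 u3 where U: "\<forall>t\<in>?S.
        (u has_vector_derivative u1 t) (at t within ?S) \<and>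
        (u1 has_vector_derivative u2 t) (at t within ?S) \<and>
        (u2 has_vector_derivative u3 t) (at t within ?S) \<and>
        u1 t = L *v u t + N (u t) \<and>
        norm (u1 t) \<le> M \<and> norm (u2 t) \<le> M \<and> norm (u3 t) \<le> M"
    unfolding setting_def by blast
  from st obtain \<delta> :: real and N1 :: "complex^'n \<Rightarrow> ((complex^'n) \<Rightarrow>\<^sub>L (complex^'n))"
      and N2 :: "complex^'n \<Rightarrow> ((complex^'n) \<Rightarrow>\<^sub>L ((complex^'n) \<Rightarrow>\<^sub>L (complex^'n)))"
    where \<delta>: "\<delta> > 0" and NN: "\<forall>v\<in>(\<Union>t\<in>?S. ball (u t) \<delta>).
          (N has_derivative blinfun_apply (N1 v)) (at v) \<and>
          (N1 has_derivative blinfun_apply (N2 v)) (at v) \<and>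
          norm (N1 v) \<le> M \<and> norm (N2 v) \<le> M"
    unfolding setting_def by blast
  have ball: "u s \<in> (\<Union>t\<in>?S. ball (u t) \<delta>)" if "s \<in> ?S" for s
    using that \<delta> by (intro UN_I[of s]) auto
  note Us = U[rule_format] and NNs = NN[rule_format, OF ball]
  have u1eq: "L *v u s + N (u s) = u1 s" if "s \<in> ?S" for s using Us[OF that] by auto
  show M0: "0 \<le> M" using Us[OF t] norm_ge_zero order_trans by blast
  show "norm (L *v u t + N (u t)) \<le> M" unfolding u1eq[OF t] using Us[OF t] by blast
  have dNu: "((\<lambda>s. N (u s)) has_vector_derivative N1 (u s) (u1 s)) (at s within ?S)" if s: "s \<in> ?S" for s
    using chain_vec[of u "u1 s" s ?S N "N1 (u s)"] Us[OF s] NNs[OF s] by blast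
  have Lu1: "L *v u1 s = u2 s - N1 (u s) (u1 s)" if s: "s \<in> ?S" for s
  proof -
    have "((\<lambda>s. L *v u s + N (u s)) has_vector_derivative L *v u1 s + N1 (u s) (u1 s)) (at s within ?S)"
      by (rule has_vector_derivative_add[OF bounded_linear.has_vector_derivative[OF matrix_vector_mul_bounded_linear] dNu[OF s]])
         (use Us[OF s] in blast)
    then have "(u1 has_vector_derivative L *v u1 s + N1 (u s) (u1 s)) (at s within ?S)"
      by (rule has_vector_derivative_transform[OF s, rotated]) (use Us in auto)
    then have "u2 s = L *v u1 s + N1 (u s) (u1 s)"
      using vector_derivative_unique_within_closed_interval[OF tT] Us[OF s] s by (metis cbox_interval)
    then show ?thesis by simp
  qed
  have nN1: "norm (N1 (u s) x) \<le> M * norm x" if s: "s \<in> ?S" for s x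
    using norm_blinfun[of "N1 (u s)" x] NNs[OF s] by (meson mult_right_mono norm_ge_zero order_trans)
  show "norm (L *v (L *v u t + N (u t))) \<le> M + M * M"
  proof -
    have "norm (L *v (L *v u t + N (u t))) = norm (u2 t - N1 (u t) (u1 t))"
      unfolding u1eq[OF t] Lu1[OF t] ..
    also have "\<dots> \<le> norm (u2 t) + norm (N1 (u t) (u1 t))" by (rule norm_triangle_ineq4)
    also have "\<dots> \<le> M + M * M"
      using Us[OF t] nN1[OF t, of "u1 t"] M0 by (meson add_mono mult_left_mono order_trans)
    finally show ?thesis .
  qed
  assume hyp: "norm (L *v vector_derivative (\<lambda>s. N (u s)) (at t within {t0..T})) \<le> M"
  have vd: "vector_derivative (\<lambda>s. N (u s)) (at t within ?S) = N1 (u t) (u1 t)"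
    by (rule vector_derivative_within_closed_interval[OF tT t dNu[OF t]])
  have Lu2: "L *v u2 t = u3 t - (N2 (u t) (u1 t) (u1 t) + N1 (u t) (u2 t))"
  proof -
    have dN1u: "((\<lambda>s. N1 (u s)) has_vector_derivative N2 (u t) (u1 t)) (at t within ?S)"
      using chain_vec[of u "u1 t" t ?S N1 "N2 (u t)"] Us[OF t] NNs[OF t] by blast
    have dprod: "((\<lambda>s. N1 (u s) (u1 s)) has_vector_derivative (N1 (u t) (u2 t) + N2 (u t) (u1 t) (u1 t))) (at t within ?S)"
      by (rule bounded_bilinear.has_vector_derivative[OF bounded_bilinear_blinfun_apply dN1u]) (use Us[OF t] in blast)
    have "((\<lambda>s. u2 s - N1 (u s) (u1 s)) has_vector_derivative u3 t - (N1 (u t) (u2 t) + N2 (u t) (u1 t) (u1 t))) (at t within ?S)"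
      by (rule has_vector_derivative_diff[OF _ dprod]) (use Us[OF t] in blast)
    then have "((\<lambda>s. L *v u1 s) has_vector_derivative u3 t - (N1 (u t) (u2 t) + N2 (u t) (u1 t) (u1 t))) (at t within ?S)"
      by (rule has_vector_derivative_transform[OF t, rotated]) (simp add: Lu1)
    moreover have "((\<lambda>s. L *v u1 s) has_vector_derivative L *v u2 t) (at t within ?S)"
      by (rule bounded_linear.has_vector_derivative[OF matrix_vector_mul_bounded_linear]) (use Us[OF t] in blast)
    ultimately show ?thesis
      using vector_derivative_unique_within_closed_interval[OF tT] t by (metis cbox_interval add.commute)
  qed
  have nN2: "norm (N2 (u t) (u1 t) (u1 t)) \<le> M * (M * M)"
  proof -
    have "norm (N2 (u t) (u1 t) (u1 t)) \<le> norm (N2 (u t) (u1 t)) * norm (u1 t)" by (rule norm_blinfun)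
    also have "\<dots> \<le> (norm (N2 (u t)) * norm (u1 t)) * norm (u1 t)"
      by (rule mult_right_mono[OF norm_blinfun norm_ge_zero])
    also have "\<dots> \<le> (M * M) * M"
      using Us[OF t] NNs[OF t] M0 by (intro mult_mono) auto
    finally show ?thesis by (simp add: mult.commute)
  qed
  have "L *v (L *v (L *v u t + N (u t))) = L *v u2 t - L *v (N1 (u t) (u1 t))"
    unfolding u1eq[OF t] Lu1[OF t] by (rule matrix_vector_mult_diff_distrib)
  also have "\<dots> = u3 t - N2 (u t) (u1 t) (u1 t) - N1 (u t) (u2 t) - L *v vector_derivative (\<lambda>s. N (u s)) (at t within ?S)"
    using Lu2 vd by (simp add: algebra_simps)
  finally have eq: "L *v (L *v (L *v u t + N (u t))) = \<dots>" .
  have "norm (u3 t - N2 (u t) (u1 t) (u1 t) - N1 (u t) (u2 t) - L *v vector_derivative (\<lambda>s. N (u s)) (at t within ?S))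
      \<le> norm (u3 t) + norm (N2 (u t) (u1 t) (u1 t)) + norm (N1 (u t) (u2 t)) + norm (L *v vector_derivative (\<lambda>s. N (u s)) (at t within ?S))"
    by (smt (verit) norm_triangle_ineq4)
  also have "\<dots> \<le> M + M * (M * M) + M * M + M"
    using Us[OF t] nN2 nN1[OF t, of "u2 t"] hyp M0
    by (smt (verit) mult_left_mono)
  finally show "norm (L *v (L *v (L *v u t + N (u t)))) \<le> 2 * M + M * M + M * (M * M)"
    unfolding eq by simp
qed



theorem lemma3p2:
  fixes M :: real
  shows "\<exists>C. \<forall>(L :: complex^'n^'n) N (u :: real \<Rightarrow> complex^'n) t0 T.
     setting L N u t0 T M \<longrightarrow>
       (\<forall>t\<in>{t0..T}. \<forall>h>0.
          norm ((matrix_inv (mat 1 - h *\<^sub>R L) - phi1 (h *\<^sub>R L))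
                  *v (L *v u t + N (u t))) \<le> C * h) \<and>
       ((\<forall>t\<in>{t0..T}. norm (L *v vector_derivative (\<lambda>s. N (u s)) (at t within {t0..T})) \<le> M) \<longrightarrow>
         (\<forall>t\<in>{t0..T}. \<forall>h>0.
          norm ((matrix_inv (mat 1 - (h / 2) *\<^sub>R L) - phi1 (h *\<^sub>R L))
                  *v (L *v u t + N (u t))) \<le> C * h\<^sup>2))"
proof (intro exI[of _ "2 * M + M * M + M * (M * M)"] allI impI conjI ballI)
  fix L :: "complex^'n^'n" and N u t0 T t and h :: real
  assume st: "setting L N u t0 T M" and t: "t \<in> {t0..T}" and h: "0 < h"
  have diss: "\<forall>v. inner v (L *v v) \<le> 0" using st unfolding setting_def by blast
  note sb = setting_bounds[OF st t]
  have "norm ((matrix_inv (mat 1 - h *\<^sub>R L) - phi1 (h *\<^sub>R L)) *v (L *v u t + N (u t)))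
      \<le> h * norm (L *v (L *v u t + N (u t)))" by (rule key(1)[OF diss h])
  also have "\<dots> \<le> h * (M + M * M)" using sb(3) h by (simp add: mult_left_mono)
  also have "\<dots> \<le> (2 * M + M * M + M * (M * M)) * h"
    using sb(1) h by (simp add: algebra_simps)
  finally show "norm ((matrix_inv (mat 1 - h *\<^sub>R L) - phi1 (h *\<^sub>R L)) *v (L *v u t + N (u t)))
      \<le> (2 * M + M * M + M * (M * M)) * h" .
next
  fix L :: "complex^'n^'n" and N u t0 T t and h :: real
  assume st: "setting L N u t0 T M" and t: "t \<in> {t0..T}" and h: "0 < h"
    and hyp: "\<forall>t\<in>{t0..T}. norm (L *v vector_derivative (\<lambda>s. N (u s)) (at t within {t0..T})) \<le> M"
  have diss: "\<forall>v. inner v (L *v v) \<le> 0" using st unfolding setting_def by blast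
  note sb = setting_bounds[OF st t]
  have "norm ((matrix_inv (mat 1 - (h / 2) *\<^sub>R L) - phi1 (h *\<^sub>R L)) *v (L *v u t + N (u t)))
      \<le> h\<^sup>2 * norm (L *v (L *v (L *v u t + N (u t))))" by (rule key(2)[OF diss h])
  also have "\<dots> \<le> h\<^sup>2 * (2 * M + M * M + M * (M * M))"
    using sb(4) hyp t by (simp add: mult_left_mono)
  finally show "norm ((matrix_inv (mat 1 - (h / 2) *\<^sub>R L) - phi1 (h *\<^sub>R L)) *v (L *v u t + N (u t)))
      \<le> (2 * M + M * M + M * (M * M)) * h\<^sup>2" by (simp add: mult.commute)
qed


end
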